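(* $\left\|\begin{bmatrix}1&1&0&0\\1&0&1&0\\1&0&0&1\\0&0&0&1\end{bmatrix}\right\|_\bullet>\left\|\begin{bmatrix}1&1&0&0\\0&1&1&0\\0&0&1&1\\0&0&0&1\end{bmatrix}\right\|_\bullet$.
   Context: Fix $\mathbb F\in\{\mathbb R,\mathbb C\}$. For an $m\times n$ matrix $A$, the Schur norm is $\|A\|_\bullet=\sup\{\|A\bullet X\|: X\in M_{m,n}(\mathbb F),\ \|X\|\le1\}$, where $A\bullet X=[a_{ij}x_{ij}]$ is the entrywise product and $\|\cdot\|$ is the operator norm $\ell^2_n\to\ell^2_m$. *)

theory Defs
  imports "HOL-Analysis.Analysis"
begin

definition mat_opnorm :: "'a::{real_normed_field}^'n^'m \<Rightarrow> real" where
  "mat_opnorm X = onorm (\<lambda>x. X *v x)"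

definition schur_prod :: "'a::times^'n^'m \<Rightarrow> 'a^'n^'m \<Rightarrow> 'a^'n^'m" where
  "schur_prod A X = (\<chi> i j. A $ i $ j * X $ i $ j)"

definition schur_norm :: "'a::{real_normed_field}^'n^'m \<Rightarrow> real" where
  "schur_norm A = Sup {mat_opnorm (schur_prod A X) | X. mat_opnorm X \<le> 1}"

definition matA :: "'a::{real_normed_field}^4^4" where
  "matA = vector [vector [1,1,0,0], vector [1,0,1,0], vector [1,0,0,1], vector [0,0,0,1]]"

definition matB :: "'a::{real_normed_field}^4^4" where
  "matB = vector [vector [1,1,0,0], vector [0,1,1,0], vector [0,0,1,1], vector [0,0,0,1]]"

end

theory Submission
  imports Defs
begin


lemma vector_4 [simp]:
 "(vector [x,y,z,w] ::('a::zero)^4)$1 = x"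
 "(vector [x,y,z,w] ::('a::zero)^4)$2 = y"
 "(vector [x,y,z,w] ::('a::zero)^4)$3 = z"
 "(vector [x,y,z,w] ::('a::zero)^4)$4 = w"
  unfolding vector_def by simp_all

lemma norm_vec_sq: "(norm (x::'a::real_normed_vector^'n))^2 = (\<Sum>i\<in>UNIV. (norm (x$i))^2)"
  by (simp add: norm_vec_def L2_set_def sum_nonneg)

lemma contr:
  fixes X :: "'a::{real_normed_field,euclidean_space}^'n^'m"
  assumes "mat_opnorm X \<le> 1" shows "norm (X *v w) \<le> norm w"
proof -
  have "norm (X *v w) \<le> mat_opnorm X * norm w"
    unfolding mat_opnorm_def by (rule onorm) simp
  also have "\<dots> \<le> 1 * norm w" by (rule mult_right_mono[OF assms]) simp
  finally show ?thesis by simp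
qed

lemma schur_fact_bound:
  fixes M X :: "'a::{real_normed_field,euclidean_space}^'n^'m"
    and U :: "'m \<Rightarrow> 'k::finite \<Rightarrow> real" and V :: "'n \<Rightarrow> 'k \<Rightarrow> real" and d :: "'k \<Rightarrow> real"
  assumes d: "\<And>k. d k \<ge> 0"
    and M: "\<And>i j. M$i$j = of_real (\<Sum>k\<in>UNIV. d k * U i k * V j k)"
    and a: "\<And>i. (\<Sum>k\<in>UNIV. d k * (U i k)^2) \<le> a"
    and b: "\<And>j. (\<Sum>k\<in>UNIV. d k * (V j k)^2) \<le> b"
    and X: "mat_opnorm X \<le> 1"
  shows "mat_opnorm (schur_prod M X) \<le> sqrt (a*b)"
proof -
  have a0: "0 \<le> a" using a[of undefined] d
    by (meson order_trans sum_nonneg mult_nonneg_nonneg zero_le_power2)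
  have b0: "0 \<le> b" using b[of undefined] d
    by (meson order_trans sum_nonneg mult_nonneg_nonneg zero_le_power2)
  show ?thesis unfolding mat_opnorm_def
  proof (rule onorm_le)
    fix y :: "'a^'n"
    define w where "w k = (\<chi> j. of_real (V j k) * y$j)" for k
    define z where "z k = X *v w k" for k
    have comp: "(schur_prod M X *v y)$i = (\<Sum>k\<in>UNIV. of_real (d k * U i k) * (z k $ i))" for i
    proof -
      have "(schur_prod M X *v y)$i = (\<Sum>j\<in>UNIV. M$i$j * X$i$j * y$j)"
        by (simp add: matrix_vector_mult_def schur_prod_def)
      also have "\<dots> = (\<Sum>j\<in>UNIV. \<Sum>k\<in>UNIV. of_real (d k * U i k) * (X$i$j * (of_real (V j k) * y$j)))"
        by (rule sum.cong[OF refl]) (simp add: M sum_distrib_left sum_distrib_right of_real_sum mult.assoc mult.left_commute)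
      also have "\<dots> = (\<Sum>k\<in>UNIV. \<Sum>j\<in>UNIV. of_real (d k * U i k) * (X$i$j * (of_real (V j k) * y$j)))"
        by (rule sum.swap)
      also have "\<dots> = (\<Sum>k\<in>UNIV. of_real (d k * U i k) * (z k $ i))"
        by (simp add: z_def w_def matrix_vector_mult_def sum_distrib_left)
      finally show ?thesis .
    qed
    have pt: "(norm ((schur_prod M X *v y)$i))^2 \<le> a * (\<Sum>k\<in>UNIV. d k * (norm (z k $ i))^2)" for i
    proof -
      have "norm ((schur_prod M X *v y)$i) \<le> (\<Sum>k\<in>UNIV. norm (of_real (d k * U i k) * (z k $ i)))"
        unfolding comp by (rule norm_sum)
      also have "\<dots> = (\<Sum>k\<in>UNIV. (sqrt (d k) * \<bar>U i k\<bar>) * (sqrt (d k) * norm (z k $ i)))"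
      proof (rule sum.cong[OF refl])
        fix k
        have "sqrt (d k) * sqrt (d k) = d k" using d[of k] by simp
        then show "norm (of_real (d k * U i k) * (z k $ i)) = (sqrt (d k) * \<bar>U i k\<bar>) * (sqrt (d k) * norm (z k $ i))"
          using d[of k] by (simp add: norm_mult abs_mult mult_ac)
      qed
      finally have h: "norm ((schur_prod M X *v y)$i) \<le> \<dots>" .
      have "(norm ((schur_prod M X *v y)$i))^2 \<le> (\<Sum>k\<in>UNIV. (sqrt (d k) * \<bar>U i k\<bar>) * (sqrt (d k) * norm (z k $ i)))^2"
        by (rule power_mono[OF h]) simp
      also have "\<dots> \<le> (\<Sum>k\<in>UNIV. (sqrt (d k) * \<bar>U i k\<bar>)^2) * (\<Sum>k\<in>UNIV. (sqrt (d k) * norm (z k $ i))^2)"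
        by (rule Cauchy_Schwarz_ineq_sum)
      also have "\<dots> = (\<Sum>k\<in>UNIV. d k * (U i k)^2) * (\<Sum>k\<in>UNIV. d k * (norm (z k $ i))^2)"
        using d by (simp add: power_mult_distrib)
      also have "\<dots> \<le> a * (\<Sum>k\<in>UNIV. d k * (norm (z k $ i))^2)"
        by (rule mult_right_mono[OF a]) (simp add: sum_nonneg d)
      finally show ?thesis .
    qed
    have "(norm (schur_prod M X *v y))^2 = (\<Sum>i\<in>UNIV. (norm ((schur_prod M X *v y)$i))^2)"
      by (rule norm_vec_sq)
    also have "\<dots> \<le> (\<Sum>i\<in>UNIV. a * (\<Sum>k\<in>UNIV. d k * (norm (z k $ i))^2))"
      by (rule sum_mono) (rule pt)
    also have "\<dots> = a * (\<Sum>i\<in>UNIV. \<Sum>k\<in>UNIV. d k * (norm (z k $ i))^2)"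
      by (simp add: sum_distrib_left)
    also have "\<dots> = a * (\<Sum>k\<in>UNIV. \<Sum>i\<in>UNIV. d k * (norm (z k $ i))^2)"
      by (subst sum.swap) (rule refl)
    also have "\<dots> = a * (\<Sum>k\<in>UNIV. d k * (norm (z k))^2)"
      by (simp add: norm_vec_sq sum_distrib_left)
    also have "\<dots> \<le> a * (\<Sum>k\<in>UNIV. d k * (norm (w k))^2)"
    proof (rule mult_left_mono[OF sum_mono a0])
      fix k
      have "norm (z k) \<le> norm (w k)" unfolding z_def by (rule contr[OF X])
      then show "d k * (norm (z k))^2 \<le> d k * (norm (w k))^2"
        by (intro mult_left_mono[OF power_mono d]) simp_all
    qed
    also have "(\<Sum>k\<in>UNIV. d k * (norm (w k))^2) = (\<Sum>k\<in>UNIV. \<Sum>j\<in>UNIV. (norm (y$j))^2 * (d k * (V j k)^2))"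
      by (rule sum.cong[OF refl]) (simp add: norm_vec_sq w_def norm_mult power_mult_distrib sum_distrib_left mult.commute mult.left_commute)
    also have "\<dots> = (\<Sum>j\<in>UNIV. \<Sum>k\<in>UNIV. (norm (y$j))^2 * (d k * (V j k)^2))"
      by (rule sum.swap)
    also have "\<dots> = (\<Sum>j\<in>UNIV. (norm (y$j))^2 * (\<Sum>k\<in>UNIV. d k * (V j k)^2))"
      by (simp add: sum_distrib_left)
    also have "\<dots> \<le> (\<Sum>j\<in>UNIV. (norm (y$j))^2 * b)"
      by (rule sum_mono, rule mult_left_mono[OF b]) simp
    also have "\<dots> = b * (norm y)^2" by (simp add: norm_vec_sq sum_distrib_left mult.commute)
    finally have "(norm (schur_prod M X *v y))^2 \<le> a * (b * (norm y)^2)"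
      using a0 by (simp add: mult_left_mono)
    also have "\<dots> = (sqrt (a*b) * norm y)^2"
      using a0 b0 by (simp add: power_mult_distrib)
    finally show "norm (schur_prod M X *v y) \<le> sqrt (a*b) * norm y"
      by (rule power2_le_imp_le) (simp add: a0 b0)
  qed
qed


lemma schur_norm_le:
  fixes M :: "'a::{real_normed_field,euclidean_space}^'n^'m"
  assumes "\<And>X. mat_opnorm X \<le> 1 \<Longrightarrow> mat_opnorm (schur_prod M X) \<le> c"
  shows "schur_norm M \<le> c"
  unfolding schur_norm_def
proof (rule cSup_least)
  have "mat_opnorm (0::'a^'n^'m) = 0" proof -
    have "(\<lambda>x. (0::'a^'n^'m) *v x) = (\<lambda>x. 0)"
      by (simp add: fun_eq_iff vec_eq_iff matrix_vector_mult_def)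
    then show ?thesis unfolding mat_opnorm_def by (metis onorm_zero)
  qed
  then have "mat_opnorm (schur_prod M 0) \<in> {mat_opnorm (schur_prod M X) |X. mat_opnorm X \<le> 1}"
    by (metis (mono_tags, lifting) mem_Collect_eq order_refl zero_le_one)
  then show "{mat_opnorm (schur_prod M X) |X. mat_opnorm X \<le> 1} \<noteq> {}" by blast
next
  fix t assume "t \<in> {mat_opnorm (schur_prod M X) |X. mat_opnorm X \<le> 1}"
  then show "t \<le> c" using assms by auto
qed

lemma schur_norm_ge:
  fixes M X :: "'a::{real_normed_field,euclidean_space}^'n^'m"
  assumes "\<And>X. mat_opnorm X \<le> 1 \<Longrightarrow> mat_opnorm (schur_prod M X) \<le> c"
    and "mat_opnorm X \<le> 1"
  shows "norm (schur_prod M X *v y) / norm y \<le> schur_norm M"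
proof -
  have "norm (schur_prod M X *v y) / norm y \<le> mat_opnorm (schur_prod M X)"
    unfolding mat_opnorm_def by (rule le_onorm) simp
  also have "\<dots> \<le> schur_norm M"
    unfolding schur_norm_def
  proof (rule cSup_upper)
    show "mat_opnorm (schur_prod M X) \<in> {mat_opnorm (schur_prod M X) |X. mat_opnorm X \<le> 1}"
      using assms(2) by blast
    show "bdd_above {mat_opnorm (schur_prod M X) |X. mat_opnorm X \<le> 1}"
      using assms(1) by (auto simp: bdd_above_def)
  qed
  finally show ?thesis .
qed

definition ofr :: "real^'n^'m \<Rightarrow> 'a::real_normed_field^'n^'m" where
  "ofr R = (\<chi> i j. of_real (R$i$j))"
definition ofv :: "real^'n \<Rightarrow> 'a::real_normed_field^'n" where
  "ofv v = (\<chi> i. of_real (v$i))"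

lemma ofr_mult: "schur_prod (ofr A) (ofr R) *v (ofv y) = ofv (schur_prod A R *v y)"
  by (simp add: vec_eq_iff ofr_def ofv_def schur_prod_def matrix_vector_mult_def of_real_sum)

lemma norm_ofv: "norm (ofv v :: 'a::real_normed_field^'n) = norm v"
  by (simp add: norm_vec_def ofv_def)

lemma matA_ofr: "(matA :: 'a::real_normed_field^4^4) = ofr matA"
  by (simp add: vec_eq_iff forall_4 ofr_def matA_def)

lemma matB_ofr: "(matB :: 'a::real_normed_field^4^4) = ofr matB"
  by (simp add: vec_eq_iff forall_4 ofr_def matB_def)


definition LB :: "real^4^4" where
  "LB = vector[vector[1,0,0,0], vector[3/8,1,0,0], vector[-1/8,27/55,1,0], vector[1/8,-1/5,11/18,1]]"
definition VB :: "real^4^4" where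
  "VB = vector[vector[1/8,-3/55,17/342,-7/95], vector[1/8,1/11,-5/171,2/95],
               vector[0,8/55,14/171,-2/95], vector[0,0,55/342,7/95]]"
definition dB :: "real^4" where
  "dB = vector[8,55/8,342/55,95/18]"

lemma ofr_nth: "(ofr R :: 'a::real_normed_field^'n^'m)$i$j = of_real (R$i$j)"
  by (simp add: ofr_def)

lemma matB_nth: "(matB :: 'a::real_normed_field^4^4)$i$j = of_real ((matB::real^4^4)$i$j)"
  by (metis matB_ofr ofr_nth)

lemma matA_nth: "(matA :: 'a::real_normed_field^4^4)$i$j = of_real ((matA::real^4^4)$i$j)"
  by (metis matA_ofr ofr_nth)

lemma matB_bound:
  assumes "mat_opnorm X \<le> 1"
  shows "mat_opnorm (schur_prod (matB :: 'a::{real_normed_field,euclidean_space}^4^4) X) \<le> sqrt (8 * (18/95))"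
proof (rule schur_fact_bound[where d="\<lambda>k. dB$k" and U="\<lambda>i k. LB$i$k" and V="\<lambda>j k. VB$j$k"])
  have "\<forall>k. 0 \<le> dB $ k" by (simp add: forall_4 dB_def)
  then show "\<And>k. 0 \<le> dB $ k" by blast
  have "\<forall>i j. (matB::real^4^4) $ i $ j = (\<Sum>k\<in>UNIV. dB $ k * LB $ i $ k * VB $ j $ k)"
    by (simp add: forall_4 sum_4 dB_def LB_def VB_def matB_def)
  then show "\<And>i j. (matB::'a^4^4) $ i $ j = of_real (\<Sum>k\<in>UNIV. dB $ k * LB $ i $ k * VB $ j $ k)"
    by (metis matB_nth)
  have "\<forall>i. (\<Sum>k\<in>UNIV. dB $ k * (LB $ i $ k)\<^sup>2) \<le> 8"
    by (simp add: forall_4 sum_4 dB_def LB_def power2_eq_square)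
  then show "\<And>i. (\<Sum>k\<in>UNIV. dB $ k * (LB $ i $ k)\<^sup>2) \<le> 8" by blast
  have "\<forall>j. (\<Sum>k\<in>UNIV. dB $ k * (VB $ j $ k)\<^sup>2) \<le> 18/95"
    by (simp add: forall_4 sum_4 dB_def VB_def power2_eq_square)
  then show "\<And>j. (\<Sum>k\<in>UNIV. dB $ k * (VB $ j $ k)\<^sup>2) \<le> 18/95" by blast
qed (rule assms)

lemma matA_bound:
  assumes "mat_opnorm X \<le> 1"
  shows "mat_opnorm (schur_prod (matA :: 'a::{real_normed_field,euclidean_space}^4^4) X) \<le> sqrt (2 * 1)"
proof (rule schur_fact_bound[where d="\<lambda>k. 1" and U="\<lambda>i k. matA$i$k" and V="\<lambda>j k. if j = k then 1 else 0"])
  show "\<And>i j. (matA::'a^4^4) $ i $ j = of_real (\<Sum>k\<in>UNIV. 1 * (matA::real^4^4) $ i $ k * (if j = k then 1 else 0))"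
  proof -
    fix i j :: 4
    have "(\<Sum>k\<in>UNIV. 1 * (matA::real^4^4) $ i $ k * (if j = k then 1 else 0)) = (matA::real^4^4) $ i $ j"
      by (simp add: if_distrib cong: if_cong)
    then show "(matA::'a^4^4) $ i $ j = of_real (\<Sum>k\<in>UNIV. 1 * (matA::real^4^4) $ i $ k * (if j = k then 1 else 0))"
      by (metis matA_nth)
  qed
  have "\<forall>i. (\<Sum>k\<in>UNIV. 1 * ((matA::real^4^4) $ i $ k)\<^sup>2) \<le> 2"
    by (simp add: forall_4 sum_4 matA_def)
  then show "\<And>i. (\<Sum>k\<in>UNIV. 1 * ((matA::real^4^4) $ i $ k)\<^sup>2) \<le> 2" by blast
  show "\<And>j::4. (\<Sum>k\<in>UNIV. 1 * (if j = k then 1 else 0::real)\<^sup>2) \<le> 1"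
  proof -
    fix j :: 4
    have "\<And>k. (1::real) * (if j = k then 1 else 0)^2 = (if j = k then 1 else 0)" by simp
    then show "(\<Sum>k\<in>UNIV. 1 * (if j = k then 1 else 0::real)\<^sup>2) \<le> 1" by simp
  qed
qed (auto intro: assms)



definition RA :: "real^4^4" where
  "RA = vector[vector[10/21,17/21,-4/21,-6/21], vector[10/21,-4/21,17/21,-6/21],
               vector[15/21,-6/21,-6/21,12/21], vector[-4/21,10/21,10/21,15/21]]"
definition yA :: "real^4" where
  "yA = vector[2,1,1,1]"

lemma orth_norm:
  fixes R :: "real^'n^'m"
  assumes G: "\<And>j l. (\<Sum>i\<in>UNIV. R$i$j * R$i$l) = (if j = l then 1 else 0)"
  shows "(norm (R *v x))^2 = (norm x)^2"
proof -
  have "(norm (R *v x))^2 = (\<Sum>i\<in>UNIV. (\<Sum>j\<in>UNIV. R$i$j * x$j)^2)"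
    by (simp add: norm_vec_sq matrix_vector_mult_def)
  also have "\<dots> = (\<Sum>i\<in>UNIV. \<Sum>j\<in>UNIV. \<Sum>l\<in>UNIV. (R$i$j * R$i$l) * (x$j * x$l))"
    by (simp add: power2_eq_square sum_product mult_ac)
  also have "\<dots> = (\<Sum>j\<in>UNIV. \<Sum>i\<in>UNIV. \<Sum>l\<in>UNIV. (R$i$j * R$i$l) * (x$j * x$l))"
    by (rule sum.swap)
  also have "\<dots> = (\<Sum>j\<in>UNIV. \<Sum>l\<in>UNIV. \<Sum>i\<in>UNIV. (R$i$j * R$i$l) * (x$j * x$l))"
    by (rule sum.cong[OF refl]) (rule sum.swap)
  also have "\<dots> = (\<Sum>j\<in>UNIV. \<Sum>l\<in>UNIV. (\<Sum>i\<in>UNIV. R$i$j * R$i$l) * (x$j * x$l))"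
    by (simp add: sum_distrib_right)
  also have "\<dots> = (\<Sum>j\<in>UNIV. (x$j)^2)"
  proof -
    have h: "\<And>j l y. (if j = l then 1 else 0) * (y::real) = (if j = l then y else 0)" by simp
    show ?thesis by (simp add: G h power2_eq_square)
  qed
  also have "\<dots> = (norm x)^2" by (simp add: norm_vec_sq)
  finally show ?thesis .
qed

lemma RA_gram: "\<And>j l. (\<Sum>i\<in>UNIV. RA$i$j * RA$i$l) = (if j = l then 1 else 0)"
proof -
  have "\<forall>j l. (\<Sum>i\<in>UNIV. RA$i$j * RA$i$l) = (if j = l then 1 else 0)"
    by (simp add: forall_4 sum_4 RA_def)
  then show "\<And>j l. (\<Sum>i\<in>UNIV. RA$i$j * RA$i$l) = (if j = l then 1 else 0)" by blast
qed

lemma RA_contr_real: "mat_opnorm (ofr RA :: real^4^4) \<le> 1"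
proof -
  have e: "(ofr RA :: real^4^4) = RA" by (simp add: ofr_def vec_eq_iff)
  show ?thesis unfolding e mat_opnorm_def
  proof (rule onorm_le)
    fix x :: "real^4"
    have "(norm (RA *v x))^2 = (norm x)^2" by (rule orth_norm[OF RA_gram])
    then show "norm (RA *v x) \<le> 1 * norm x" by simp
  qed
qed

lemma RA_contr_complex: "mat_opnorm (ofr RA :: complex^4^4) \<le> 1"
  unfolding mat_opnorm_def
proof (rule onorm_le)
  fix x :: "complex^4"
  define xr where "xr = (\<chi> j. Re (x$j))"
  define xi where "xi = (\<chi> j. Im (x$j))"
  have "(norm (ofr RA *v x))^2 = (\<Sum>i\<in>UNIV. (Re ((ofr RA *v x)$i))^2 + (Im ((ofr RA *v x)$i))^2)"
    by (simp add: norm_vec_sq cmod_power2)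
  also have "\<dots> = (\<Sum>i\<in>UNIV. ((RA *v xr)$i)^2 + ((RA *v xi)$i)^2)"
    by (simp add: ofr_def matrix_vector_mult_def xr_def xi_def Re_sum Im_sum)
  also have "\<dots> = (norm (RA *v xr))^2 + (norm (RA *v xi))^2"
    by (simp add: norm_vec_sq sum.distrib)
  also have "\<dots> = (norm xr)^2 + (norm xi)^2"
    by (simp add: orth_norm[OF RA_gram])
  also have "\<dots> = (norm x)^2"
    by (simp add: norm_vec_sq sum.distrib[symmetric] cmod_power2 xr_def xi_def)
  finally have "(norm (ofr RA *v x))^2 = (norm x)^2" .
  then show "norm (ofr RA *v x) \<le> 1 * norm x" by simp
qed

lemma lower_real: "sqrt (8 * (18/95)) < norm (schur_prod matA RA *v yA) / norm yA"
proof -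
  have v: "schur_prod matA RA *v yA = vector[37/21,37/21,42/21,15/21]"
    by (simp add: vec_eq_iff forall_4 matrix_vector_mult_def sum_4 schur_prod_def matA_def RA_def yA_def)
  have n1: "norm (schur_prod matA RA *v yA) = sqrt (4727/441)"
    unfolding v by (simp add: norm_vec_def L2_set_def sum_4 power2_eq_square)
  have n2: "norm yA = sqrt 7"
    by (simp add: yA_def norm_vec_def L2_set_def sum_4)
  have "sqrt (4727/441) / sqrt 7 = sqrt (4727/3087)"
    by (simp add: real_sqrt_divide[symmetric])
  moreover have "sqrt (8 * (18/95)) < sqrt (4727/3087)"
    by (simp add: real_sqrt_less_iff)
  ultimately show ?thesis using n1 n2 by simp
qed

lemma main_gen:
  assumes X: "mat_opnorm (ofr RA :: 'a::{real_normed_field,euclidean_space}^4^4) \<le> 1"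
  shows "schur_norm (matB::'a^4^4) < schur_norm (matA::'a^4^4)"
proof -
  have "schur_norm (matB::'a^4^4) \<le> sqrt (8 * (18/95))"
    by (rule schur_norm_le) (rule matB_bound)
  also have "\<dots> < norm (schur_prod matA RA *v yA) / norm yA" by (rule lower_real)
  also have "\<dots> = norm (schur_prod (matA::'a^4^4) (ofr RA) *v ofv yA) / norm (ofv yA :: 'a^4)"
  proof -
    have e1: "schur_prod (matA::'a^4^4) (ofr RA) *v ofv yA = ofv (schur_prod matA RA *v yA)"
      by (metis matA_ofr ofr_mult)
    show ?thesis unfolding e1 norm_ofv ..
  qed
  also have "\<dots> \<le> schur_norm (matA::'a^4^4)"
    by (rule schur_norm_ge[OF matA_bound X])
  finally show ?thesis .
qed

theorem proposition5p6:
  shows "schur_norm (matA :: real^4^4) > schur_norm (matB :: real^4^4)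
       \<and> schur_norm (matA :: complex^4^4) > schur_norm (matB :: complex^4^4)"
  using main_gen[OF RA_contr_real] main_gen[OF RA_contr_complex] by simp

end
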